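(* For $z\in(0,\tfrac14)$ and $x\in[0,1]$, the function $f(z,x)=\sum_{n\ge0}P_n(x)z^n$ is given by $$f(z,x)=\Big[\sqrt{2zx+1-2z}\;S\Big(\sqrt{\tfrac{2zx+1-2z}{1-2z}}\Big)\Big]^{-1}.$$
   Context: The polynomials $P_n,Q_n$ on $[0,1]$ are defined by $Q_0=P_0=1$, $Q_{n+1}(x)=\sum_{m=0}^n\big[\int_x^1Q_m(t)dt\big]Q_{n-m}(x)$, $P_{n+1}(x)=\sum_{m=0}^n\big[\int_0^xP_m(t)dt+\int_x^1Q_m(t)dt\big]P_{n-m}(x)$. Let $T(t)=\int_t^1\frac{s\,ds}{s^2-s+1}=-\tfrac12\log(t^2-t+1)-\tfrac{\sqrt3}{3}\big[\arctan\big(\tfrac{2t-1}{\sqrt3}\big)-\tfrac{\pi}{6}\big]$; $t\mapsto e^{T(t)}$ is a strictly decreasing bijection $[0,\infty)\to(0,e^{\sqrt3\pi/9}]$, and $S$ denotes its inverse function. *)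

theory Defs
  imports "HOL-Analysis.Analysis"
begin

fun Qp :: "nat \<Rightarrow> real \<Rightarrow> real" where
  "Qp 0 = (\<lambda>x. 1)"
| "Qp (Suc n) = (\<lambda>x. \<Sum>m\<in>{0..n}. integral {x..1} (Qp m) * Qp (n - m) x)"

fun Pp :: "nat \<Rightarrow> real \<Rightarrow> real" where
  "Pp 0 = (\<lambda>x. 1)"
| "Pp (Suc n) = (\<lambda>x. \<Sum>m\<in>{0..n}.
      (integral {0..x} (Pp m) + integral {x..1} (Qp m)) * Pp (n - m) x)"

definition Tfun :: "real \<Rightarrow> real" where
  "Tfun t = - (1/2) * ln (t\<^sup>2 - t + 1)
            - (sqrt 3 / 3) * (arctan ((2*t - 1) / sqrt 3) - pi / 6)"

text \<open>S is the inverse of t \<mapsto> exp (T t) on [0,\<infinity>).\<close>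
definition Sinv :: "real \<Rightarrow> real" where
  "Sinv y = (THE t. 0 \<le> t \<and> exp (Tfun t) = y)"

end

theory Submission
  imports Defs
begin

fun ab :: "nat \<Rightarrow> real" where
  "ab 0 = 1"
| "ab (Suc n) = (\<Sum>m\<in>{0..n}. ab m * ab (n - m))"

lemma ab_nonneg: "0 \<le> ab n"
proof (induction n rule: less_induct)
  case (less n) then show ?case
    by (cases n) (auto intro!: sum_nonneg mult_nonneg_nonneg)
qed

lemma int_bounds:
  fixes f :: "real \<Rightarrow> real"
  assumes "continuous_on {0..1} f" "\<And>x. x \<in> {0..1} \<Longrightarrow> 0 \<le> f x \<and> f x \<le> M"
    "0 \<le> a" "a \<le> b" "b \<le> 1"
  shows "0 \<le> integral {a..b} f \<and> integral {a..b} f \<le> (b - a) * M"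
proof -
  have c: "continuous_on {a..b} f" using assms by (meson atLeastatMost_subset_iff continuous_on_subset order_refl)
  have i: "f integrable_on {a..b}" using c integrable_continuous_real by blast
  have "0 \<le> integral {a..b} f" using assms by (intro integral_nonneg[OF i]) auto
  moreover have "integral {a..b} f \<le> integral {a..b} (\<lambda>_. M)"
    using assms by (intro integral_le[OF i]) auto
  ultimately show ?thesis using assms by simp
qed

lemma cont_left:
  fixes f :: "real \<Rightarrow> real"
  assumes "continuous_on {0..1} f"
  shows "continuous_on {0..1} (\<lambda>x. integral {0..x} f)"
  using assms indefinite_integral_continuous_1 integrable_continuous_real by blast

lemma cont_right:
  fixes f :: "real \<Rightarrow> real"
  assumes "continuous_on {0..1} f"
  shows "continuous_on {0..1} (\<lambda>x. integral {x..1} f)"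
  using assms indefinite_integral_continuous_1' integrable_continuous_real by blast

lemma Q_props: "\<forall>k\<le>n. continuous_on {0..1} (Qp k) \<and> (\<forall>x\<in>{0..1}. 0 \<le> Qp k x \<and> Qp k x \<le> ab k)"
proof (induction n)
  case 0 then show ?case by auto
next
  case (Suc n)
  have "continuous_on {0..1} (Qp (Suc n))"
    using Suc by (auto intro!: continuous_intros cont_right)
  moreover have "0 \<le> Qp (Suc n) x \<and> Qp (Suc n) x \<le> ab (Suc n)" if x: "x \<in> {0..1}" for x
  proof -
    have "0 \<le> integral {x..1} (Qp m) * Qp (n - m) x \<and> integral {x..1} (Qp m) * Qp (n - m) x \<le> ab m * ab (n - m)"
      if "m \<in> {0..n}" for m
    proof -
      have h1: "0 \<le> integral {x..1} (Qp m) \<and> integral {x..1} (Qp m) \<le> (1 - x) * ab m"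
        using Suc that x by (intro int_bounds) auto
      have "(1 - x) * ab m \<le> ab m" using x ab_nonneg[of m] by (simp add: mult_left_le_one_le)
      moreover have "0 \<le> Qp (n - m) x \<and> Qp (n - m) x \<le> ab (n - m)" using Suc x by auto
      ultimately show ?thesis using h1 by (auto intro: mult_mono)
    qed
    then show ?thesis by (auto intro!: sum_nonneg sum_mono)
  qed
  ultimately show ?case using Suc le_Suc_eq by auto
qed

lemma P_props: "\<forall>k\<le>n. continuous_on {0..1} (Pp k) \<and> (\<forall>x\<in>{0..1}. 0 \<le> Pp k x \<and> Pp k x \<le> ab k)"
proof (induction n)
  case 0 then show ?case by auto
next
  case (Suc n)
  have Q: "continuous_on {0..1} (Qp k) \<and> (\<forall>x\<in>{0..1}. 0 \<le> Qp k x \<and> Qp k x \<le> ab k)" for k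
    using Q_props by blast
  have "continuous_on {0..1} (Pp (Suc n))"
    using Suc Q by (auto intro!: continuous_intros cont_right cont_left)
  moreover have "0 \<le> Pp (Suc n) x \<and> Pp (Suc n) x \<le> ab (Suc n)" if x: "x \<in> {0..1}" for x
  proof -
    have "0 \<le> (integral {0..x} (Pp m) + integral {x..1} (Qp m)) * Pp (n - m) x \<and> 
          (integral {0..x} (Pp m) + integral {x..1} (Qp m)) * Pp (n - m) x \<le> ab m * ab (n - m)"
      if "m \<in> {0..n}" for m
    proof -
      have h1: "0 \<le> integral {x..1} (Qp m) \<and> integral {x..1} (Qp m) \<le> (1 - x) * ab m"
        using Q that x by (intro int_bounds) auto
      have h2: "0 \<le> integral {0..x} (Pp m) \<and> integral {0..x} (Pp m) \<le> (x - 0) * ab m"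
        using Suc that x by (intro int_bounds) auto
      have "(1 - x) * ab m + (x - 0) * ab m = ab m" by (simp add: algebra_simps)
      moreover have "0 \<le> Pp (n - m) x \<and> Pp (n - m) x \<le> ab (n - m)" using Suc x by auto
      ultimately show ?thesis using h1 h2 by (auto intro: mult_mono)
    qed
    then show ?thesis by (auto intro!: sum_nonneg sum_mono)
  qed
  ultimately show ?case using Suc le_Suc_eq by auto
qed

lemma Qc: "continuous_on {0..1} (Qp k)" and Qb: "x \<in> {0..1} \<Longrightarrow> 0 \<le> Qp k x \<and> Qp k x \<le> ab k"
  using Q_props by blast+
lemma Pc: "continuous_on {0..1} (Pp k)" and Pb: "x \<in> {0..1} \<Longrightarrow> 0 \<le> Pp k x \<and> Pp k x \<le> ab k"
  using P_props by blast+

lemma partial_step: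
  fixes z :: real assumes z: "0 \<le> z"
  shows "(\<Sum>n<Suc N. ab n * z^n) \<le> 1 + z * (\<Sum>n<N. ab n * z^n)^2"
proof -
  define g where "g = (\<lambda>i j. (ab i * z^i) * (ab j * z^j))"
  have "(\<Sum>n<Suc N. ab n * z^n) = 1 + (\<Sum>n<N. ab (Suc n) * z^(Suc n))"
    by (subst sum.lessThan_Suc_shift) simp
  also have "(\<Sum>n<N. ab (Suc n) * z^(Suc n)) = z * (\<Sum>n<N. \<Sum>i\<le>n. g i (n - i))"
  proof -
    have "ab (Suc n) * z^n = (\<Sum>i\<le>n. g i (n - i))" for n
    proof -
      have "ab (Suc n) * z^n = (\<Sum>i\<le>n. ab i * ab (n - i) * z^n)"
        by (simp add: sum_distrib_right atLeast0AtMost)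
      also have "\<dots> = (\<Sum>i\<le>n. g i (n - i))"
        by (intro sum.cong refl) (auto simp: g_def power_add[symmetric])
      finally show ?thesis .
    qed
    then have "(\<Sum>n<N. ab (Suc n) * z^(Suc n)) = (\<Sum>n<N. z * (\<Sum>i\<le>n. g i (n - i)))"
      by (intro sum.cong refl) (metis mult.assoc mult.commute power_Suc)
    then show ?thesis by (simp add: sum_distrib_left)
  qed
  also have "(\<Sum>n<N. \<Sum>i\<le>n. g i (n - i)) = (\<Sum>(i,j)\<in>{(i,j). i+j < N}. g i j)"
    by (rule sum.triangle_reindex[symmetric])
  also have "\<dots> \<le> (\<Sum>(i,j)\<in>{..<N}\<times>{..<N}. g i j)"
    by (rule sum_mono2) (auto simp: g_def z ab_nonneg)
  also have "\<dots> = (\<Sum>n<N. ab n * z^n)^2"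
    by (simp add: g_def power2_eq_square sum_product sum.cartesian_product)
  finally show ?thesis using z by (auto intro: mult_left_mono)
qed

lemma partial_bound:
  fixes z :: real assumes z: "0 \<le> z" "z \<le> 1/4"
  shows "(\<Sum>n<N. ab n * z^n) \<le> 2"
proof (induction N)
  case 0 then show ?case by simp
next
  case (Suc N)
  have nn: "0 \<le> (\<Sum>n<N. ab n * z^n)" using z by (auto intro!: sum_nonneg simp: ab_nonneg)
  have "(\<Sum>n<N. ab n * z^n)^2 \<le> 2^2" using Suc nn by (intro power_mono) auto
  then have "z * (\<Sum>n<N. ab n * z^n)^2 \<le> z * 4" using z by (auto intro: mult_left_mono)
  then show ?case using partial_step[OF z(1), of N] z by linarith
qed

lemma ab_summable:
  fixes z :: real assumes z: "0 \<le> z" "z \<le> 1/4"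
  shows "summable (\<lambda>n. ab n * z^n)"
proof (rule bounded_imp_summable)
  show "0 \<le> ab n * z^n" for n using z by (simp add: ab_nonneg)
  show "(\<Sum>k\<le>n. ab k * z^k) \<le> 2" for n
    using partial_bound[OF z, of "Suc n"] by (simp add: lessThan_Suc_atMost)
qed

lemma ser_summable:
  fixes z :: real assumes z: "0 \<le> z" "z \<le> 1/4" and b: "\<And>n. \<bar>u n\<bar> \<le> ab n"
  shows "summable (\<lambda>n. norm (u n * z^n))" "summable (\<lambda>n. u n * z^n)"
    "\<bar>\<Sum>n. u n * z^n\<bar> \<le> (\<Sum>n. ab n * z^n)"
proof -
  have le: "norm (u n * z^n) \<le> ab n * z^n" for n
  proof -
    have "\<bar>u n\<bar> * z^n \<le> ab n * z^n" using b[of n] z by (intro mult_right_mono) auto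
    then show ?thesis using z by (simp add: abs_mult)
  qed
  show s: "summable (\<lambda>n. norm (u n * z^n))"
    by (rule summable_comparison_test'[OF ab_summable[OF z]]) (use le in simp)
  then show "summable (\<lambda>n. u n * z^n)" by (rule summable_norm_cancel)
  show "\<bar>\<Sum>n. u n * z^n\<bar> \<le> (\<Sum>n. ab n * z^n)"
  proof -
    have "\<bar>\<Sum>n. u n * z^n\<bar> \<le> (\<Sum>n. norm (u n * z^n))"
      using summable_norm[OF s] by (simp only: real_norm_def)
    also have "\<dots> \<le> (\<Sum>n. ab n * z^n)"
      by (intro suminf_le s ab_summable[OF z] le)
    finally show ?thesis .
  qed
qed

lemma series_int:
  fixes z :: real and u :: "nat \<Rightarrow> real \<Rightarrow> real"
  assumes z: "0 \<le> z" "z \<le> 1/4" and c: "\<And>n. continuous_on {0..1} (u n)"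
    and b: "\<And>n x. x \<in> {0..1} \<Longrightarrow> \<bar>u n x\<bar> \<le> ab n"
    and ab: "0 \<le> a" "a \<le> b" "b \<le> 1"
  shows "(\<lambda>x. \<Sum>n. u n x * z^n) integrable_on {a..b}"
    "(\<lambda>n. integral {a..b} (u n) * z^n) sums integral {a..b} (\<lambda>x. \<Sum>n. u n x * z^n)"
proof -
  have sub: "{a..b} \<subseteq> {0..1}" using ab by auto
  define f where "f = (\<lambda>k x. \<Sum>n<k. u n x * z^n)"
  define A where "A = (\<Sum>n. ab n * z^n)"
  have ci: "(u n) integrable_on {a..b}" for n
    using c[of n] continuous_on_subset[OF _ sub] integrable_continuous_real by blast
  have fi: "(f k) integrable_on {a..b}" for k
    unfolding f_def by (intro integrable_sum finite_lessThan integrable_on_mult_left ci)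
  have hi: "(\<lambda>_. A) integrable_on {a..b}" by (intro integrable_continuous_real continuous_on_const)
  have le: "norm (f k x) \<le> A" if x: "x \<in> {a..b}" for k x
  proof -
    have "norm (f k x) \<le> (\<Sum>n<k. ab n * z^n)"
      unfolding f_def
    proof (rule order_trans[OF norm_sum], rule sum_mono)
      fix n assume "n \<in> {..<k}"
      have "\<bar>u n x\<bar> \<le> ab n" using b[of x n] x sub by blast
      then show "norm (u n x * z ^ n) \<le> ab n * z ^ n"
        using z by (simp add: abs_mult mult_right_mono)
    qed
    also have "\<dots> \<le> A" unfolding A_def
      using ab_summable[OF z] z by (intro sum_le_suminf) (auto simp: ab_nonneg)
    finally show ?thesis .
  qed
  have conv: "(\<lambda>k. f k x) \<longlonglongrightarrow> (\<Sum>n. u n x * z^n)" if x: "x \<in> {a..b}" for x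
    unfolding f_def
    by (rule summable_LIMSEQ) (use ser_summable[OF z, of "\<lambda>n. u n x"] b x sub in auto)
  note dc = dominated_convergence[OF fi hi le conv]
  show "(\<lambda>x. \<Sum>n. u n x * z^n) integrable_on {a..b}" using dc(1) .
  have "integral {a..b} (f k) = (\<Sum>n<k. integral {a..b} (u n) * z^n)" for k
  proof -
    have "integral {a..b} (f k) = (\<Sum>n<k. integral {a..b} (\<lambda>x. u n x * z^n))"
      unfolding f_def by (intro integral_sum finite_lessThan integrable_on_mult_left ci)
    also have "\<dots> = (\<Sum>n<k. integral {a..b} (u n) * z^n)"
      by (intro sum.cong refl integral_unique has_integral_mult_left integrable_integral ci)
    finally show ?thesis .
  qed
  then show "(\<lambda>n. integral {a..b} (u n) * z^n) sums integral {a..b} (\<lambda>x. \<Sum>n. u n x * z^n)"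
    using dc(2) unfolding sums_def by simp
qed

definition fP :: "real \<Rightarrow> real \<Rightarrow> real" where "fP z x = (\<Sum>n. Pp n x * z^n)"
definition fQ :: "real \<Rightarrow> real \<Rightarrow> real" where "fQ z x = (\<Sum>n. Qp n x * z^n)"

lemma Qabs: "x \<in> {0..1} \<Longrightarrow> \<bar>Qp n x\<bar> \<le> ab n" using Qb[of x n] by simp
lemma Pabs: "x \<in> {0..1} \<Longrightarrow> \<bar>Pp n x\<bar> \<le> ab n" using Pb[of x n] by simp

lemma fQ_int:
  fixes z :: real assumes z: "0 \<le> z" "z \<le> 1/4" and ab: "0 \<le> a" "a \<le> b" "b \<le> 1"
  shows "fQ z integrable_on {a..b}" "(\<lambda>n. integral {a..b} (Qp n) * z^n) sums integral {a..b} (fQ z)"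
  using series_int[OF z Qc Qabs ab] unfolding fQ_def[abs_def] by auto

lemma fP_int:
  fixes z :: real assumes z: "0 \<le> z" "z \<le> 1/4" and ab: "0 \<le> a" "a \<le> b" "b \<le> 1"
  shows "fP z integrable_on {a..b}" "(\<lambda>n. integral {a..b} (Pp n) * z^n) sums integral {a..b} (fP z)"
  using series_int[OF z Pc Pabs ab] unfolding fP_def[abs_def] by auto

lemma shift_sum:
  fixes u :: "nat \<Rightarrow> real"
  assumes "summable (\<lambda>n. u n * z^n)"
  shows "(\<Sum>n. u n * z^n) = u 0 + z * (\<Sum>n. u (Suc n) * z^n)"
proof -
  have "(\<Sum>n. u (Suc n) * z^(Suc n)) = (\<Sum>n. u n * z^n) - u 0 * z^0"
    using suminf_split_head[OF assms] by simp
  moreover have "(\<Sum>n. u (Suc n) * z^(Suc n)) = z * (\<Sum>n. u (Suc n) * z^n)"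
  proof -
    have "summable (\<lambda>n. u (Suc n) * z^(Suc n))" using assms summable_Suc_iff[of "\<lambda>n. u n * z^n"] by simp
    have "(\<lambda>n. u (Suc n) * z^(Suc n)) = (\<lambda>n. z * (u (Suc n) * z^n))" by (auto simp: mult_ac)
    moreover have "summable (\<lambda>n. u (Suc n) * z^n) \<or> z = 0" 
    proof (cases "z = 0")
      case False
      have "summable (\<lambda>n. (1/z) * (u (Suc n) * z^(Suc n)))"
        using \<open>summable (\<lambda>n. u (Suc n) * z^(Suc n))\<close> by (rule summable_mult)
      moreover have "(\<lambda>n. (1/z) * (u (Suc n) * z^(Suc n))) = (\<lambda>n. u (Suc n) * z^n)" using False by auto
      ultimately show ?thesis by simp
    qed simp
    ultimately show ?thesis using suminf_mult by auto
  qed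
  ultimately show ?thesis by simp
qed

lemma cauchy_eq:
  fixes z :: real and I u :: "nat \<Rightarrow> real"
  assumes z: "0 \<le> z" "z \<le> 1/4" and bI: "\<And>n. \<bar>I n\<bar> \<le> ab n" and bu: "\<And>n. \<bar>u n\<bar> \<le> ab n"
    and rec: "\<And>n. u (Suc n) = (\<Sum>m\<in>{0..n}. I m * u (n - m))"
    and u0: "u 0 = 1"
  shows "(\<Sum>n. u n * z^n) = 1 + z * (\<Sum>n. I n * z^n) * (\<Sum>n. u n * z^n)"
proof -
  have "(\<Sum>n. u n * z^n) = 1 + z * (\<Sum>n. u (Suc n) * z^n)"
    using shift_sum[OF ser_summable(2)[OF z bu]] u0 by simp
  also have "(\<Sum>n. u (Suc n) * z^n) = (\<Sum>n. \<Sum>i\<le>n. (I i * z^i) * (u (n - i) * z^(n - i)))"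
  proof -
    have "u (Suc n) * z^n = (\<Sum>i\<le>n. (I i * z^i) * (u (n - i) * z^(n - i)))" for n
    proof -
      have "u (Suc n) * z^n = (\<Sum>i\<le>n. I i * u (n - i) * z^n)"
        by (simp add: rec sum_distrib_right atLeast0AtMost)
      also have "\<dots> = (\<Sum>i\<le>n. (I i * z^i) * (u (n - i) * z^(n - i)))"
        by (intro sum.cong refl) (auto simp: power_add[symmetric])
      finally show ?thesis .
    qed
    then show ?thesis by simp
  qed
  also have "\<dots> = (\<Sum>n. I n * z^n) * (\<Sum>n. u n * z^n)"
    by (rule Cauchy_product[symmetric]) (intro ser_summable(1)[OF z] bI bu)+
  finally show ?thesis by (simp add: mult.assoc)
qed


lemma Ibound_Q: "x \<in> {0..1} \<Longrightarrow> 0 \<le> integral {x..1} (Qp n) \<and> integral {x..1} (Qp n) \<le> (1 - x) * ab n"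
  by (rule int_bounds[OF Qc]) (use Qb in auto)
lemma Ibound_P: "x \<in> {0..1} \<Longrightarrow> 0 \<le> integral {0..x} (Pp n) \<and> integral {0..x} (Pp n) \<le> (x - 0) * ab n"
  by (rule int_bounds[OF Pc]) (use Pb in auto)

lemma fQ_eq:
  fixes z :: real assumes z: "0 \<le> z" "z \<le> 1/4" and x: "x \<in> {0..1}"
  shows "fQ z x = 1 + z * integral {x..1} (fQ z) * fQ z x"
proof -
  have s: "(\<Sum>n. integral {x..1} (Qp n) * z^n) = integral {x..1} (fQ z)"
    using fQ_int(2)[OF z, of x 1] x by (auto simp: sums_iff)
  have bI: "\<bar>integral {x..1} (Qp n)\<bar> \<le> ab n" for n
  proof -
    have "(1 - x) * ab n \<le> ab n" using x ab_nonneg[of n] by (simp add: mult_left_le_one_le)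
    then show ?thesis using Ibound_Q[OF x, of n] by auto
  qed
  show ?thesis
    using cauchy_eq[OF z bI Qabs[OF x]] s unfolding fQ_def by simp
qed

lemma fP_eq:
  fixes z :: real assumes z: "0 \<le> z" "z \<le> 1/4" and x: "x \<in> {0..1}"
  shows "fP z x = 1 + z * (integral {0..x} (fP z) + integral {x..1} (fQ z)) * fP z x"
proof -
  have s1: "(\<lambda>n. integral {x..1} (Qp n) * z^n) sums integral {x..1} (fQ z)"
    using fQ_int(2)[OF z, of x 1] x by auto
  have s2: "(\<lambda>n. integral {0..x} (Pp n) * z^n) sums integral {0..x} (fP z)"
    using fP_int(2)[OF z, of 0 x] x by auto
  have s: "(\<Sum>n. (integral {0..x} (Pp n) + integral {x..1} (Qp n)) * z^n) = integral {0..x} (fP z) + integral {x..1} (fQ z)"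
    using sums_add[OF s2 s1] by (simp add: sums_iff distrib_right)
  have bI: "\<bar>integral {0..x} (Pp n) + integral {x..1} (Qp n)\<bar> \<le> ab n" for n
  proof -
    have "(1 - x) * ab n + (x - 0) * ab n = ab n" by (simp add: algebra_simps)
    then show ?thesis using Ibound_Q[OF x, of n] Ibound_P[OF x, of n] by auto
  qed
  show ?thesis
    using cauchy_eq[OF z bI Pabs[OF x]] s unfolding fP_def by simp
qed

lemma fP_ge1:
  fixes z :: real assumes z: "0 \<le> z" "z \<le> 1/4" and x: "x \<in> {0..1}"
  shows "1 \<le> fP z x"
proof -
  have "(\<Sum>n<1. Pp n x * z^n) \<le> fP z x" unfolding fP_def
    by (rule sum_le_suminf[OF ser_summable(2)[OF z Pabs[OF x]]]) (use Pb[OF x] z in auto)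
  then show ?thesis by simp
qed

lemma fQ_ge1:
  fixes z :: real assumes z: "0 \<le> z" "z \<le> 1/4" and x: "x \<in> {0..1}"
  shows "1 \<le> fQ z x"
proof -
  have "(\<Sum>n<1. Qp n x * z^n) \<le> fQ z x" unfolding fQ_def
    by (rule sum_le_suminf[OF ser_summable(2)[OF z Qabs[OF x]]]) (use Qb[OF x] z in auto)
  then show ?thesis by simp
qed

lemma quad_pos: "0 < (t::real)\<^sup>2 - t + 1"
proof -
  have "(t::real)\<^sup>2 - t + 1 = (t - 1/2)\<^sup>2 + 3/4" by (simp add: power2_eq_square algebra_simps)
  moreover have "0 \<le> (t - 1/2)\<^sup>2" by simp
  ultimately show ?thesis by linarith
qed
lemma d0: "((\<lambda>x::real. x\<^sup>2 - x + 1) has_real_derivative (2*t - 1)) (at t)"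
  by (auto intro!: derivative_eq_intros)
lemma d1: "((\<lambda>x. ln (x\<^sup>2 - x + 1)) has_real_derivative (1/(t\<^sup>2 - t + 1)) * (2*t - 1)) (at t)"
  by (rule DERIV_chain2[OF DERIV_ln_divide[OF quad_pos] d0])
lemma d2: "((\<lambda>x. arctan ((2*x - 1) / sqrt 3)) has_real_derivative (inverse (1 + ((2*t - 1) / sqrt 3)\<^sup>2) * (2 / sqrt 3))) (at t)"
proof (rule DERIV_arctan[THEN DERIV_chain2])
  have "((\<lambda>x::real. (2*x - 1) * (1 / sqrt 3)) has_real_derivative (2 * (1 / sqrt 3))) (at t)"
    by (auto intro!: derivative_eq_intros simp: field_simps)
  then show "((\<lambda>x. (2*x - 1) / sqrt 3) has_real_derivative (2 / sqrt 3)) (at t)" by simp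
qed
lemma T_deriv: "(Tfun has_real_derivative (- t / (t\<^sup>2 - t + 1))) (at t)"
proof -
  have q: "0 < t\<^sup>2 - t + 1" by (rule quad_pos)
  have s3p: "0 < sqrt (3::real)" by simp
  have d: "(Tfun has_real_derivative
      (- (1/2) * ((1/(t\<^sup>2 - t + 1)) * (2*t - 1)) - (sqrt 3 / 3) * ((inverse (1 + ((2*t - 1) / sqrt 3)\<^sup>2) * (2 / sqrt 3)) - 0))) (at t)"
    unfolding Tfun_def[abs_def]
    by (intro DERIV_diff DERIV_cmult d1 d2 DERIV_const)
  have a: "1 + ((2*t - 1) / sqrt 3)\<^sup>2 = 4 * (t\<^sup>2 - t + 1) / 3"
    by (simp add: power_divide power2_eq_square field_simps)
  have b: "(sqrt 3 / 3) * (inverse (1 + ((2*t - 1) / sqrt 3)\<^sup>2) * (2 / sqrt 3)) = 1 / (2 * (t\<^sup>2 - t + 1))"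
  proof -
    define Q where "Q = t\<^sup>2 - t + 1"
    have Q: "0 < Q" using q Q_def by simp
    have "(sqrt 3 / 3) * (inverse (4 * Q / 3) * (2 / sqrt 3)) = 1 / (2 * Q)"
      using Q s3p by (simp add: field_simps)
    then show ?thesis unfolding a Q_def .
  qed
  have e: "- (1/2) * ((1/(t\<^sup>2 - t + 1)) * (2*t - 1)) - 1 / (2 * (t\<^sup>2 - t + 1)) = - t / (t\<^sup>2 - t + 1)"
  proof -
    define Q where "Q = t\<^sup>2 - t + 1"
    have Q: "0 < Q" using q Q_def by simp
    have "- (1/2) * ((1/Q) * (2*t - 1)) - 1 / (2 * Q) = - t / Q"
      using Q by (simp add: field_simps)
    then show ?thesis unfolding Q_def .
  qed
  show ?thesis by (rule DERIV_cong[OF d]) (simp only: diff_zero b e)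
qed

lemma T_one: "Tfun 1 = 0"
proof -
  have "arctan (1 / sqrt 3) = pi / 6"
    using arctan_tan[of "pi/6"] tan_30 by simp
  then show ?thesis unfolding Tfun_def by simp
qed

lemma T_strict_dec: assumes "0 \<le> a" "a < b" shows "Tfun b < Tfun a"
proof (rule DERIV_neg_imp_decreasing_open[OF assms(2)])
  fix x :: real assume "a < x" "x < b"
  then show "\<exists>y. (Tfun has_real_derivative y) (at x) \<and> y < 0"
    using T_deriv[of x] quad_pos[of x] assms by (intro exI[of _ "- x / (x\<^sup>2 - x + 1)"]) (auto simp: divide_pos_pos)
next
  show "continuous_on {a..b} Tfun"
    by (metis DERIV_isCont T_deriv continuous_at_imp_continuous_on)
qed

lemma Sinv_eq: "0 \<le> t \<Longrightarrow> exp (Tfun t) = y \<Longrightarrow> Sinv y = t"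
  unfolding Sinv_def
proof (rule the_equality)
  fix t' assume "0 \<le> t' \<and> exp (Tfun t') = y" "0 \<le> t" "exp (Tfun t) = y"
  then have "Tfun t' = Tfun t" by auto
  then show "t' = t" using T_strict_dec \<open>0 \<le> t\<close> \<open>0 \<le> t' \<and> _\<close>
    by (metis linorder_neqE_linordered_idom order_less_irrefl)
qed auto

lemma fQ_closed:
  fixes z :: real assumes z: "0 < z" "z < 1/4"
  shows "\<And>x. x \<in> {0..1} \<Longrightarrow> 1 - z * integral {x..1} (fQ z) = sqrt (2*z*x + 1 - 2*z)"
    "continuous_on {0..1} (fQ z)"
    "\<And>x. x \<in> {0..1} \<Longrightarrow> fQ z x * (1 - z * integral {x..1} (fQ z)) = 1"
proof -
  have z': "0 \<le> z" "z \<le> 1/4" using z by auto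
  define G where "G x = integral {x..1} (fQ z)" for x
  define u where "u x = 1 - z * G x" for x
  have uQ: "fQ z x * u x = 1" if x: "x \<in> {0..1}" for x
    using fQ_eq[OF z' x] unfolding u_def G_def by (simp add: algebra_simps)
  then show "\<And>x. x \<in> {0..1} \<Longrightarrow> fQ z x * (1 - z * integral {x..1} (fQ z)) = 1"
    unfolding u_def G_def by simp
  have upos: "0 < u x" if x: "x \<in> {0..1}" for x
  proof -
    have "0 < fQ z x * u x" using uQ[OF x] by simp
    then show ?thesis using fQ_ge1[OF z' x] unfolding zero_less_mult_iff by linarith
  qed
  have Gc: "continuous_on {0..1} G"
    unfolding G_def[abs_def] by (rule indefinite_integral_continuous_1'[OF fQ_int(1)[OF z']]) auto
  have uc: "continuous_on {0..1} u" unfolding u_def[abs_def] using Gc by (intro continuous_intros)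
  have fQc: "continuous_on {0..1} (fQ z)"
  proof -
    have nz: "\<forall>x\<in>{0..1}. u x \<noteq> 0" using upos by (metis less_irrefl)
    have "continuous_on {0..1} (\<lambda>x. 1 / u x)" by (intro continuous_on_divide continuous_on_const uc nz)
    moreover have "1 / u x = fQ z x" if x: "x \<in> {0..1}" for x
      using uQ[OF x] upos[OF x] by (simp add: field_simps)
    ultimately show ?thesis using continuous_on_cong by metis
  qed
  then show "continuous_on {0..1} (fQ z)" .
  have ud: "(u has_real_derivative z * fQ z x) (at x within {0..1})" if x: "x \<in> {0..1}" for x
  proof -
    have "(G has_real_derivative - fQ z x) (at x within {0..1})"
      unfolding G_def[abs_def] by (rule integral_has_real_derivative'[OF fQc x])
    then have "((\<lambda>x. 1 - z * G x) has_real_derivative 0 - z * (- fQ z x)) (at x within {0..1})"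
      by (intro DERIV_diff DERIV_cmult DERIV_const)
    then show ?thesis unfolding u_def[abs_def] by simp
  qed
  have d2: "((\<lambda>x. u x * u x - 2 * z * x) has_real_derivative 0) (at x within {0..1})" if x: "x \<in> {0..1}" for x
  proof -
    have h: "((\<lambda>x. u x * u x - 2 * z * x) has_real_derivative
        (z * fQ z x * u x + z * fQ z x * u x) - 2 * z * 1) (at x within {0..1})"
      by (intro DERIV_diff DERIV_mult ud[OF x] DERIV_cmult DERIV_ident)
    have e: "(z * fQ z x * u x + z * fQ z x * u x) - 2 * z * 1 = 0"
      using uQ[OF x] by (simp add: algebra_simps)
    show ?thesis by (rule DERIV_cong[OF h e])
  qed
  obtain c where c: "\<And>x. x \<in> {0..1} \<Longrightarrow> u x * u x - 2 * z * x = c"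
    using has_field_derivative_zero_constant[OF convex_real_interval(5) d2] by (auto simp: atLeastAtMost_def)
  have u1: "u 1 = 1" unfolding u_def G_def by simp
  have "c = 1 - 2 * z" using c[of 1] u1 by simp
  then have "(u x)\<^sup>2 = 2*z*x + 1 - 2*z" if x: "x \<in> {0..1}" for x
    using c[OF x] by (simp add: power2_eq_square algebra_simps)
  then show "\<And>x. x \<in> {0..1} \<Longrightarrow> 1 - z * integral {x..1} (fQ z) = sqrt (2*z*x + 1 - 2*z)"
    using upos unfolding u_def G_def
    by (metis less_eq_real_def real_sqrt_unique)
qed


lemma fP_closed:
  fixes z :: real assumes z: "0 < z" "z < 1/4" and x0: "x0 \<in> {0..1}"
  shows "fP z x0 = 1 / (sqrt (2*z*x0 + 1 - 2*z) * Sinv (sqrt ((2*z*x0 + 1 - 2*z) / (1 - 2*z))))"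
proof -
  have z': "0 \<le> z" "z \<le> 1/4" using z by auto
  define G where "G x = integral {x..1} (fQ z)" for x
  define F where "F x = integral {0..x} (fP z)" for x
  define u where "u x = 1 - z * G x" for x
  define w where "w x = 1 - z * (F x + G x)" for x
  note Q = fQ_closed[OF z]
  have us: "u x = sqrt (2*z*x + 1 - 2*z)" if x: "x \<in> {0..1}" for x
    using Q(1)[OF x] unfolding u_def G_def by simp
  have uQ: "fQ z x * u x = 1" if x: "x \<in> {0..1}" for x
    using Q(3)[OF x] unfolding u_def G_def by simp
  have upos: "0 < u x" if x: "x \<in> {0..1}" for x
  proof -
    have "0 < fQ z x * u x" using uQ[OF x] by simp
    then show ?thesis using fQ_ge1[OF z' x] unfolding zero_less_mult_iff by linarith
  qed
  have wP: "fP z x * w x = 1" if x: "x \<in> {0..1}" for x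
    using fP_eq[OF z' x] unfolding w_def G_def F_def by (simp add: algebra_simps)
  have wpos: "0 < w x" if x: "x \<in> {0..1}" for x
  proof -
    have "0 < fP z x * w x" using wP[OF x] by simp
    then show ?thesis using fP_ge1[OF z' x] unfolding zero_less_mult_iff by linarith
  qed
  have Gc: "continuous_on {0..1} G"
    unfolding G_def[abs_def] by (rule indefinite_integral_continuous_1'[OF fQ_int(1)[OF z']]) auto
  have Fc: "continuous_on {0..1} F"
    unfolding F_def[abs_def] by (rule indefinite_integral_continuous_1[OF fP_int(1)[OF z']]) auto
  have wc: "continuous_on {0..1} w" unfolding w_def[abs_def] using Gc Fc by (intro continuous_intros)
  have fPc: "continuous_on {0..1} (fP z)"
  proof -
    have nz: "\<forall>x\<in>{0..1}. w x \<noteq> 0" using wpos by (metis less_irrefl)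
    have "continuous_on {0..1} (\<lambda>x. 1 / w x)" by (intro continuous_on_divide continuous_on_const wc nz)
    moreover have "1 / w x = fP z x" if x: "x \<in> {0..1}" for x
      using wP[OF x] wpos[OF x] by (simp add: field_simps)
    ultimately show ?thesis using continuous_on_cong by metis
  qed
  have Gd: "(G has_real_derivative - fQ z x) (at x within {0..1})" if x: "x \<in> {0..1}" for x
    unfolding G_def[abs_def] by (rule integral_has_real_derivative'[OF Q(2) x])
  have Fd: "(F has_real_derivative fP z x) (at x within {0..1})" if x: "x \<in> {0..1}" for x
    unfolding F_def[abs_def] by (rule integral_has_real_derivative[OF fPc x])
  have ud: "(u has_real_derivative z * fQ z x) (at x within {0..1})" if x: "x \<in> {0..1}" for x
  proof -
    have "((\<lambda>x. 1 - z * G x) has_real_derivative 0 - z * (- fQ z x)) (at x within {0..1})"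
      by (intro DERIV_diff DERIV_cmult DERIV_const Gd x)
    then show ?thesis unfolding u_def[abs_def] by simp
  qed
  have wd: "(w has_real_derivative - z * (fP z x - fQ z x)) (at x within {0..1})" if x: "x \<in> {0..1}" for x
  proof -
    have "((\<lambda>x. 1 - z * (F x + G x)) has_real_derivative 0 - z * (fP z x + - fQ z x)) (at x within {0..1})"
      by (intro DERIV_diff DERIV_cmult DERIV_const DERIV_add Gd Fd x)
    then show ?thesis unfolding w_def[abs_def] by simp
  qed
  define \<Psi> where "\<Psi> x = Tfun (w x / u x) - ln (u x)" for x
  have \<Psi>d: "(\<Psi> has_real_derivative 0) (at x within {0..1})" if x: "x \<in> {0..1}" for x
  proof -
    define W where "W = w x"
    define U where "U = u x"
    define W' where "W' = - z * (fP z x - fQ z x)"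
    define U' where "U' = z * fQ z x"
    have W: "0 < W" "U > 0" using wpos[OF x] upos[OF x] W_def U_def by auto
    have fPW: "fP z x = 1 / W" using wP[OF x] W unfolding W_def by (simp add: field_simps)
    have fQU: "fQ z x = 1 / U" using uQ[OF x] W unfolding U_def by (simp add: field_simps)
    have sd: "((\<lambda>x. w x / u x) has_real_derivative (W' * U - W * U') / (U * U)) (at x within {0..1})"
      unfolding W_def U_def W'_def U'_def using W(2) U_def
      by (intro DERIV_divide wd ud x) auto
    have h: "(\<Psi> has_real_derivative
       (- (W / U) / ((W / U)\<^sup>2 - W / U + 1)) * ((W' * U - W * U') / (U * U)) - (1 / U) * U') (at x within {0..1})"
      unfolding \<Psi>_def[abs_def]
      apply (rule DERIV_diff)
      subgoal using DERIV_chain2[OF T_deriv sd] unfolding W_def U_def by simp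
      subgoal using DERIV_chain2[OF DERIV_ln_divide[OF upos[OF x]] ud[OF x]] unfolding U_def U'_def by simp
      done
    have q: "0 < (W / U)\<^sup>2 - W / U + 1" by (rule quad_pos)
    have e: "(- (W / U) / ((W / U)\<^sup>2 - W / U + 1)) * ((W' * U - W * U') / (U * U)) - (1 / U) * U' = 0"
    proof -
      have W'e: "W' = - z * (1 / W - 1 / U)" and U'e: "U' = z / U" using fPW fQU W'_def U'_def by auto
      have qq: "(W / U)\<^sup>2 - W / U + 1 = (W*W - W*U + U*U) / (U*U)" using W by (simp add: field_simps power2_eq_square)
      have qp: "0 < W*W - W*U + U*U" using q qq W by (simp add: zero_less_divide_iff)
      define D where "D = W*W - W*U + U*U"
      have Dp: "0 < D" using qp D_def by simp
      have h1: "- (W / U) / ((W / U)\<^sup>2 - W / U + 1) = - (W * U) / D"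
        unfolding qq D_def[symmetric] using W Dp by (simp add: field_simps)
      have h2: "(W' * U - W * U') / (U * U) = - z * D / (W * U * U * U)"
        unfolding W'e U'e D_def using W by (simp add: field_simps) (simp add: algebra_simps)?
      have h3: "(- (W * U) / D) * (- z * D / (W * U * U * U)) - (1 / U) * (z / U) = 0"
        using W Dp by (simp add: field_simps)
      show ?thesis unfolding h1 h2 using h3 unfolding U'e .
    qed
    show ?thesis by (rule DERIV_cong[OF h e])
  qed
  obtain c where c: "\<And>x. x \<in> {0..1} \<Longrightarrow> \<Psi> x = c"
    using has_field_derivative_zero_constant[OF convex_real_interval(5) \<Psi>d] by (auto simp: atLeastAtMost_def)
  have w0: "w 0 = u 0" unfolding w_def u_def F_def by simp
  have u0: "0 < u 0" using upos by simp
  have "c = - ln (u 0)" using c[of 0] w0 u0 unfolding \<Psi>_def by (simp add: T_one)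
  then have Tx: "Tfun (w x0 / u x0) = ln (u x0) - ln (u 0)" using c[OF x0] unfolding \<Psi>_def by simp
  have "exp (Tfun (w x0 / u x0)) = u x0 / u 0"
    unfolding Tx using upos[OF x0] u0 by (simp add: exp_diff)
  also have "u x0 / u 0 = sqrt ((2*z*x0 + 1 - 2*z) / (1 - 2*z))"
    using us[OF x0] us[of 0] by (simp add: real_sqrt_divide)
  finally have "Sinv (sqrt ((2*z*x0 + 1 - 2*z) / (1 - 2*z))) = w x0 / u x0"
    using wpos[OF x0] upos[OF x0] by (intro Sinv_eq) auto
  then show ?thesis
    using us[OF x0] wP[OF x0] wpos[OF x0] upos[OF x0] by (simp add: field_simps)
qed

theorem mainTheorem5:
  fixes z x :: real
  assumes "0 < z" "z < 1/4" "0 \<le> x" "x \<le> 1"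
  shows "(\<lambda>n. Pp n x * z ^ n) sums
           (1 / (sqrt (2*z*x + 1 - 2*z) * Sinv (sqrt ((2*z*x + 1 - 2*z) / (1 - 2*z)))))"
proof -
  have x: "x \<in> {0..1}" using assms by auto
  have z': "0 \<le> z" "z \<le> 1/4" using assms by auto
  have "(\<lambda>n. Pp n x * z ^ n) sums fP z x"
    unfolding fP_def using ser_summable(2)[OF z' Pabs[OF x]] by (rule summable_sums)
  then show ?thesis using fP_closed[OF assms(1,2) x] by simp
qed

end
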